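(* In the setting of arc-length coordinates $(x,x')$ on the exterior of the oval $\gamma$, consider the $2$-form $$\omega=-\frac{\partial^2 H(x,x')}{\partial x\,\partial x'}\,dx\wedge dx',$$ where $H(x,x')=|\gamma(x)A|+|A\gamma(x')|$. Let $\omega_0$ be the standard Euclidean area form of the plane, expressed in the coordinates $(x,x')$ and oriented so that $\omega_0=c\,dx\wedge dx'$ with $c>0$. Then at the point $A$ corresponding to $(x,x')$, $$\omega=\cot\Big(\frac{\varphi}{2}\Big)\left(\frac{1}{|A\gamma(x)|}+\frac{1}{|A\gamma(x')|}\right)\omega_0,$$ where $\varphi\in(0,\pi)$ is the angle at $A$ between the segments $A\gamma(x)$ and $A\gamma(x')$.
   Context: An oval is a smooth closed simple planar curve $\gamma$ with everywhere positive curvature; it bounds a compact strictly convex domain $K$. Orient $\gamma$ counterclockwise and let $s\mapsto\gamma(s)$ be an arc length parameterization increasing along this orientation. For a point $A\in\mathbb{R}^2\setminus K$ there are exactly two lines through $A$ tangent to $\gamma$. The positive tangency point $x_+(A)$ is the one for which $x_+(A)-A$ is a positive multiple of the oriented tangent vector of $\gamma$ at $x_+(A)$. The negative tangency point $x_-(A)$ is the one for which $A-x_-(A)$ is a positive multiple of the oriented tangent vector of $\gamma$ at $x_-(A)$. Each exterior point $A$ is identified with the pair of arc-length parameters $(x,x')$ given by $\gamma(x)=x_-(A)$ and $\gamma(x')=x_+(A)$. This identification gives coordinates $(x,x')$ on the exterior of $\gamma$. *)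

theory Defs
  imports "HOL-Analysis.Analysis"
begin

definition smooth_real_fun :: "(real \<Rightarrow> real) \<Rightarrow> bool" where
  "smooth_real_fun f \<longleftrightarrow> (\<forall>n t. ((deriv ^^ n) f) differentiable (at t))"

definition cx :: "(real \<Rightarrow> complex) \<Rightarrow> real \<Rightarrow> real" where
  "cx \<gamma> = (\<lambda>t. Re (\<gamma> t))"

definition cy :: "(real \<Rightarrow> complex) \<Rightarrow> real \<Rightarrow> real" where
  "cy \<gamma> = (\<lambda>t. Im (\<gamma> t))"

definition tangent :: "(real \<Rightarrow> complex) \<Rightarrow> real \<Rightarrow> complex" where
  "tangent \<gamma> s = Complex (deriv (cx \<gamma>) s) (deriv (cy \<gamma>) s)"

text \<open>Signed curvature (for a unit speed curve).\<close>
definition signed_curvature :: "(real \<Rightarrow> complex) \<Rightarrow> real \<Rightarrow> real" where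
  "signed_curvature \<gamma> s =
     deriv (cx \<gamma>) s * deriv (deriv (cy \<gamma>)) s - deriv (cy \<gamma>) s * deriv (deriv (cx \<gamma>)) s"

definition arclength_oval :: "(real \<Rightarrow> complex) \<Rightarrow> real \<Rightarrow> bool" where
  "arclength_oval \<gamma> L \<longleftrightarrow>
     L > 0 \<and>
     smooth_real_fun (cx \<gamma>) \<and> smooth_real_fun (cy \<gamma>) \<and>
     (\<forall>t. \<gamma> (t + L) = \<gamma> t) \<and>
     inj_on \<gamma> {0..<L} \<and>
     (\<forall>s. norm (tangent \<gamma> s) = 1) \<and>
     (\<forall>s. signed_curvature \<gamma> s > 0)"

definition oval_domain :: "(real \<Rightarrow> complex) \<Rightarrow> complex set" where
  "oval_domain \<gamma> = range \<gamma> \<union> inside (range \<gamma>)"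

definition pos_tangency :: "(real \<Rightarrow> complex) \<Rightarrow> complex \<Rightarrow> real \<Rightarrow> bool" where
  "pos_tangency \<gamma> A s \<longleftrightarrow> (\<exists>c>0. \<gamma> s - A = of_real c * tangent \<gamma> s)"

definition neg_tangency :: "(real \<Rightarrow> complex) \<Rightarrow> complex \<Rightarrow> real \<Rightarrow> bool" where
  "neg_tangency \<gamma> A s \<longleftrightarrow> (\<exists>c>0. A - \<gamma> s = of_real c * tangent \<gamma> s)"

definition coord_point :: "(real \<Rightarrow> complex) \<Rightarrow> real \<Rightarrow> real \<Rightarrow> complex" where
  "coord_point \<gamma> u u' =
     (THE B. B \<notin> oval_domain \<gamma> \<and> neg_tangency \<gamma> B u \<and> pos_tangency \<gamma> B u')"

definition Hfun :: "(real \<Rightarrow> complex) \<Rightarrow> real \<Rightarrow> real \<Rightarrow> real" where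
  "Hfun \<gamma> u u' = dist (\<gamma> u) (coord_point \<gamma> u u') + dist (coord_point \<gamma> u u') (\<gamma> u')"

text \<open>Jacobian determinant of (u,u') |-> A(u,u') at (x,x');
  the Euclidean area form is this times du /\ du'.\<close>
definition coord_jacobian :: "(real \<Rightarrow> complex) \<Rightarrow> real \<Rightarrow> real \<Rightarrow> real" where
  "coord_jacobian \<gamma> x x' =
     deriv (\<lambda>u. Re (coord_point \<gamma> u x')) x * deriv (\<lambda>v. Im (coord_point \<gamma> x v)) x'
   - deriv (\<lambda>v. Re (coord_point \<gamma> x v)) x' * deriv (\<lambda>u. Im (coord_point \<gamma> u x')) x"

definition vec_angle :: "complex \<Rightarrow> complex \<Rightarrow> real" where
  "vec_angle u v = arccos ((u \<bullet> v) / (norm u * norm v))"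

end

theory Submission
  imports Defs
begin


lemma smooth_deriv0: "smooth_real_fun f \<Longrightarrow> (f has_real_derivative deriv f t) (at t)"
  unfolding smooth_real_fun_def
  by (metis DERIV_deriv_iff_real_differentiable funpow_0)

lemma smooth_deriv1: "smooth_real_fun f \<Longrightarrow> (deriv f has_real_derivative deriv (deriv f) t) (at t)"
  unfolding smooth_real_fun_def
  by (metis DERIV_deriv_iff_real_differentiable funpow_0 funpow_Suc_right comp_def One_nat_def)

lemma smooth_deriv2: "smooth_real_fun f \<Longrightarrow> isCont (deriv (deriv f)) t"
proof -
  assume "smooth_real_fun f"
  then have "((deriv ^^ 2) f) differentiable (at t)" unfolding smooth_real_fun_def by blast
  then show ?thesis
    by (simp add: differentiable_imp_continuous_within numeral_2_eq_2)
qed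

locale oval =
  fixes \<gamma> :: "real \<Rightarrow> complex" and L :: real
  assumes ov: "arclength_oval \<gamma> L"
begin

definition "X = cx \<gamma>"
definition "Y = cy \<gamma>"
definition "P = deriv X"
definition "Q = deriv Y"
definition "P2 = deriv P"
definition "Q2 = deriv Q"
definition "k t = P t * Q2 t - Q t * P2 t"
definition "T t = Complex (P t) (Q t)"

lemma L_pos: "L > 0" using ov unfolding arclength_oval_def by auto
lemma smX: "smooth_real_fun X" using ov unfolding arclength_oval_def X_def by auto
lemma smY: "smooth_real_fun Y" using ov unfolding arclength_oval_def Y_def by auto
lemma per: "\<gamma> (t + L) = \<gamma> t" using ov unfolding arclength_oval_def by auto
lemma inj: "inj_on \<gamma> {0..<L}" using ov unfolding arclength_oval_def by auto
lemma T_tangent: "tangent \<gamma> s = T s"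
  unfolding tangent_def T_def P_def Q_def X_def Y_def by simp
lemma k_pos: "k s > 0" using ov unfolding arclength_oval_def signed_curvature_def k_def
  P2_def Q2_def P_def Q_def X_def Y_def by auto
lemma unitT: "norm (T s) = 1" using ov unfolding arclength_oval_def T_tangent by auto
lemma unit: "P s ^ 2 + Q s ^ 2 = 1"
  using unitT[of s] unfolding T_def cmod_def by simp

lemma dX: "(X has_real_derivative P t) (at t)" using smooth_deriv0[OF smX] P_def by simp
lemma dY: "(Y has_real_derivative Q t) (at t)" using smooth_deriv0[OF smY] Q_def by simp
lemma dP: "(P has_real_derivative P2 t) (at t)" using smooth_deriv1[OF smX] P_def P2_def by simp
lemma dQ: "(Q has_real_derivative Q2 t) (at t)" using smooth_deriv1[OF smY] Q_def Q2_def by simp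
lemma cP2: "isCont P2 t" using smooth_deriv2[OF smX] P_def P2_def by simp
lemma cQ2: "isCont Q2 t" using smooth_deriv2[OF smY] Q_def Q2_def by simp
lemma cX: "isCont X t" using dX DERIV_isCont by blast
lemma cY: "isCont Y t" using dY DERIV_isCont by blast
lemma cP: "isCont P t" using dP DERIV_isCont by blast
lemma cQ: "isCont Q t" using dQ DERIV_isCont by blast
lemma ck: "isCont k t" unfolding k_def using cP cQ cP2 cQ2 by (intro continuous_intros) auto

lemma gamma_eq: "\<gamma> t = Complex (X t) (Y t)"
  unfolding X_def Y_def cx_def cy_def by simp

lemma orth: "P t * P2 t + Q t * Q2 t = 0"
proof -
  have "((\<lambda>t. P t ^ 2 + Q t ^ 2) has_real_derivative (2 * P t * P2 t + 2 * Q t * Q2 t)) (at t)"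
    by (auto intro!: derivative_eq_intros dP dQ)
  moreover have "((\<lambda>t. P t ^ 2 + Q t ^ 2) has_real_derivative 0) (at t)"
    using unit by simp
  ultimately have "2 * P t * P2 t + 2 * Q t * Q2 t = 0" using DERIV_unique by blast
  then show ?thesis by simp
qed

lemma P2_eq: "P2 t = - k t * Q t"
proof -
  have "P2 t = P2 t * (P t ^ 2 + Q t ^ 2)" using unit by simp
  also have "\<dots> = P t * (P t * P2 t + Q t * Q2 t) - Q t * (P t * Q2 t - Q t * P2 t)"
    by (simp add: algebra_simps power2_eq_square)
  finally show ?thesis using orth[of t] unfolding k_def by (simp add: algebra_simps)
qed

lemma Q2_eq: "Q2 t = k t * P t"
proof -
  have "Q2 t = Q2 t * (P t ^ 2 + Q t ^ 2)" using unit by simp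
  also have "\<dots> = Q t * (P t * P2 t + Q t * Q2 t) + P t * (P t * Q2 t - Q t * P2 t)"
    by (simp add: algebra_simps power2_eq_square)
  finally show ?thesis using orth[of t] unfolding k_def by (simp add: algebra_simps)
qed

lemma dgamma: "(\<gamma> has_vector_derivative T t) (at t)"
  unfolding has_vector_derivative_complex_iff T_def using dX dY
  by (simp add: gamma_eq)

lemma dT: "(T has_vector_derivative (\<i> * of_real (k t) * T t)) (at t)"
proof -
  have "((\<lambda>t. Complex (P t) (Q t)) has_vector_derivative Complex (P2 t) (Q2 t)) (at t)"
    unfolding has_vector_derivative_complex_iff using dP dQ by simp
  moreover have "Complex (P2 t) (Q2 t) = \<i> * of_real (k t) * T t"
    unfolding T_def P2_eq Q2_eq by (simp add: complex_eq_iff)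
  ultimately show ?thesis unfolding T_def[abs_def] by simp
qed

lemma cgamma: "isCont \<gamma> t" using dgamma has_vector_derivative_continuous by blast
lemma cT: "isCont T t" using dT has_vector_derivative_continuous by blast

end


context oval begin

lemma per_nat: "\<gamma> (t + real n * L) = \<gamma> t"
proof (induction n arbitrary: t)
  case (Suc n) then show ?case using per[of "t + real n * L"] by (simp add: algebra_simps)
qed simp

lemma per_int: "\<gamma> (t + of_int n * L) = \<gamma> t"
proof (cases "n \<ge> 0")
  case True then show ?thesis using per_nat[of t "nat n"] by simp
next
  case False
  then have "\<gamma> (t + of_int n * L) = \<gamma> (t + of_int n * L + real (nat (-n)) * L)"
    using per_nat[of "t + of_int n * L" "nat (-n)"] by simp
  also have "\<dots> = \<gamma> t" using False by (simp add: algebra_simps)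
  finally show ?thesis .
qed

lemma red: obtains n :: int where "t - of_int n * L \<in> {0..<L}"
proof -
  let ?n = "\<lfloor>t / L\<rfloor>"
  have "of_int ?n * L \<le> t" "t < (of_int ?n + 1) * L"
    using floor_divide_lower[OF L_pos] floor_divide_upper[OF L_pos] by auto
  then show ?thesis by (intro that[of ?n]) (auto simp: algebra_simps)
qed

lemma gamma_eq_imp: assumes "\<gamma> a = \<gamma> b" shows "\<exists>n::int. b = a + of_int n * L"
proof -
  obtain m :: int where m: "a - of_int m * L \<in> {0..<L}" using red by blast
  obtain n :: int where n: "b - of_int n * L \<in> {0..<L}" using red by blast
  have "\<gamma> (a - of_int m * L) = \<gamma> a" using per_int[of "a - of_int m * L" m] by simp
  moreover have "\<gamma> (b - of_int n * L) = \<gamma> b" using per_int[of "b - of_int n * L" n] by simp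
  ultimately have "\<gamma> (a - of_int m * L) = \<gamma> (b - of_int n * L)" using assms by simp
  then have "a - of_int m * L = b - of_int n * L" using inj_onD[OF inj _ m n] by blast
  then have "b = a + of_int (n - m) * L" by (simp add: algebra_simps)
  then show ?thesis by blast
qed

lemma perX: "X (t + L) = X t" unfolding X_def cx_def using per by simp
lemma perY: "Y (t + L) = Y t" unfolding Y_def cy_def using per by simp

lemma per_deriv:
  assumes "\<And>t. f (t + L) = f t" "\<And>t. (f has_real_derivative f' t) (at t)"
  shows "f' (t + L) = f' t"
proof -
  have "((\<lambda>x. f (x + L)) has_real_derivative f' (t + L)) (at t)"
    using assms(2)[of "t + L"] DERIV_shift by blast
  then have "(f has_real_derivative f' (t + L)) (at t)" using assms(1) by simp
  then show ?thesis using assms(2)[of t] DERIV_unique by blast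
qed

lemma perP: "P (t + L) = P t" using per_deriv[OF perX dX] .
lemma perQ: "Q (t + L) = Q t" using per_deriv[OF perY dY] .
lemma perP2: "P2 (t + L) = P2 t" using per_deriv[OF perP dP] .
lemma perQ2: "Q2 (t + L) = Q2 t" using per_deriv[OF perQ dQ] .
lemma perk: "k (t + L) = k t" unfolding k_def perP perQ perP2 perQ2 ..
lemma perT: "T (t + L) = T t" unfolding T_def perP perQ ..

lemma T_nz: "T t \<noteq> 0" using unitT[of t] by auto

lemma T_cnj: "T t * cnj (T t) = 1"
  using unit[of t] by (simp add: T_def complex_eq_iff power2_eq_square)

lemma theta_exists: "\<exists>\<theta>. (\<forall>t. T t = cis (\<theta> t)) \<and> (\<forall>t. (\<theta> has_real_derivative k t) (at t))"
proof -
  have cT': "continuous_on UNIV T" using cT by (simp add: continuous_on_eq_continuous_within)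
  have "\<exists>g. continuous_on UNIV g \<and> (\<forall>x. T x = exp (g x))"
    by (rule continuous_logarithm_on_contractible[OF cT' contractible_UNIV T_nz]) auto
  then obtain g where g: "continuous_on UNIV g" "\<And>t. T t = exp (g t)" by blast
  define \<theta> where "\<theta> t = Im (g t)" for t
  have Re0: "Re (g t) = 0" for t using unitT[of t] g(2)[of t] by simp
  have Tcis: "T t = cis (\<theta> t)" for t
  proof -
    have "g t = \<i> * of_real (\<theta> t)" using Re0[of t] unfolding \<theta>_def by (simp add: complex_eq_iff)
    then show ?thesis using g(2)[of t] by (simp add: cis_conv_exp)
  qed
  have cth: "continuous_on UNIV \<theta>" unfolding \<theta>_def[abs_def] using g(1) by (rule continuous_on_Im)
  have "(\<theta> has_real_derivative k t0) (at t0)" for t0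
  proof -
    define U where "U = {t. \<bar>\<theta> t - \<theta> t0\<bar> < pi}"
    have oU: "open U" unfolding U_def
      using cth by (intro open_Collect_less continuous_intros) (auto simp: continuous_on_eq_continuous_at)
    have t0U: "t0 \<in> U" unfolding U_def by simp
    define c where "c = cnj (T t0)"
    have eqU: "\<theta> t0 + Im (Ln (T t * c)) = \<theta> t" if "t \<in> U" for t
    proof -
      have "T t * c = cis (\<theta> t - \<theta> t0)" unfolding c_def Tcis by (simp add: cis_cnj cis_mult)
      also have "\<dots> = exp (\<i> * of_real (\<theta> t - \<theta> t0))" by (simp add: cis_conv_exp)
      finally have e: "T t * c = exp (\<i> * of_real (\<theta> t - \<theta> t0))" .
      have "Ln (exp (\<i> * of_real (\<theta> t - \<theta> t0))) = \<i> * of_real (\<theta> t - \<theta> t0)"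
        by (rule Ln_exp) (use that in \<open>auto simp: U_def\<close>)
      then have "Ln (T t * c) = \<i> * of_real (\<theta> t - \<theta> t0)" using e by simp
      then show ?thesis by simp
    qed
    have d1: "((\<lambda>t. T t * c) has_vector_derivative (\<i> * of_real (k t0) * T t0 * c)) (at t0)"
      using dT[of t0] by (rule has_vector_derivative_mult_left)
    have one: "T t0 * c = 1" unfolding c_def by (rule T_cnj)
    have d2: "(Ln has_field_derivative inverse (T t0 * c)) (at (T t0 * c))"
      using one by (intro has_field_derivative_Ln) auto
    have "((Ln \<circ> (\<lambda>t. T t * c)) has_vector_derivative (\<i> * of_real (k t0) * T t0 * c) * inverse (T t0 * c)) (at t0)"
      by (rule field_vector_diff_chain_at[OF d1 d2])
    then have "((\<lambda>t. Ln (T t * c)) has_vector_derivative (\<i> * of_real (k t0))) (at t0)"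
      using one by (simp add: comp_def mult.assoc)
    then have "((\<lambda>t. Im (Ln (T t * c))) has_real_derivative k t0) (at t0)"
      unfolding has_vector_derivative_complex_iff by simp
    then have "((\<lambda>t. \<theta> t0 + Im (Ln (T t * c))) has_real_derivative k t0) (at t0)"
      using DERIV_add[OF DERIV_const] by fastforce
    then show ?thesis using has_field_derivative_transform_within_open[OF _ oU t0U] eqU by blast
  qed
  then show ?thesis using Tcis by blast
qed

end



lemma cis_eq_1_imp: assumes "cis x = 1" shows "\<exists>n::int. x = 2 * pi * of_int n"
proof -
  have "exp (\<i> * of_real x) = 1" using assms by (simp add: cis_conv_exp)
  then obtain n :: int where "Im (\<i> * of_real x) = of_int (2 * n) * pi" unfolding exp_eq_1 by blast
  then show ?thesis by (intro exI[of _ n]) simp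
qed

lemma lift_diff_const:
  fixes f g :: "real \<Rightarrow> real"
  assumes "continuous_on {a..b} f" "continuous_on {a..b} g" "a \<le> b"
    and "\<And>t. t \<in> {a..b} \<Longrightarrow> cis (f t) = cis (g t)"
  shows "f b - g b = f a - g a"
proof -
  have int: "\<exists>n::int. f t - g t = 2 * pi * of_int n" if "t \<in> {a..b}" for t
  proof -
    have "cis (f t - g t) = 1" using assms(4)[OF that]
      by (metis cis_divide divide_self_if cis_neq_zero)
    then show ?thesis by (rule cis_eq_1_imp)
  qed
  have "(\<lambda>t. f t - g t) constant_on {a..b}"
  proof (rule continuous_discrete_range_constant)
    show "connected {a..b}" by simp
    show "continuous_on {a..b} (\<lambda>t. f t - g t)" using assms by (intro continuous_intros)
    fix x assume x: "x \<in> {a..b}"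
    show "\<exists>e>0. \<forall>y. y \<in> {a..b} \<and> f y - g y \<noteq> f x - g x \<longrightarrow> e \<le> norm (f y - g y - (f x - g x))"
    proof (intro exI[of _ "2 * pi"] conjI allI impI)
      fix y assume y: "y \<in> {a..b} \<and> f y - g y \<noteq> f x - g x"
      obtain n :: int where n: "f x - g x = 2 * pi * of_int n" using int x by blast
      obtain m :: int where m: "f y - g y = 2 * pi * of_int m" using int y by blast
      have "m \<noteq> n" using y n m by auto
      then have "1 \<le> \<bar>m - n\<bar>" by linarith
      then have "1 \<le> \<bar>of_int m - of_int n :: real\<bar>" by (metis of_int_1_le_iff of_int_abs of_int_diff)
      then have "2 * pi * 1 \<le> 2 * pi * \<bar>of_int m - of_int n :: real\<bar>" by (intro mult_left_mono) auto
      also have "\<dots> = norm (f y - g y - (f x - g x))"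
      proof -
        have "f y - g y - (f x - g x) = 2 * pi * (of_int m - of_int n)" using n m by (simp add: algebra_simps)
        then show ?thesis by (simp add: abs_mult)
      qed
      finally show "2 * pi \<le> norm (f y - g y - (f x - g x))" by simp
    qed simp
  qed
  then show ?thesis using assms(3) unfolding constant_on_def by force
qed

lemma sin_3pi2: "sin (3 * pi / 2) = -1"
proof -
  have "3 * pi / 2 = pi / 2 + pi" by simp
  then show ?thesis by (simp only: sin_periodic_pi sin_pi_half)
qed

lemma edge_lemma:
  fixes \<psi> :: "real \<Rightarrow> real"
  assumes cont: "continuous_on {0..L} \<psi>" and L: "0 \<le> L" and p0: "\<psi> 0 = 0"
    and cL: "cis (\<psi> L) = -1" and sg: "\<sigma> = 1 \<or> \<sigma> = -1"
    and pos: "\<And>t. t \<in> {0..L} \<Longrightarrow> \<sigma> * sin (\<psi> t) \<ge> 0"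
  shows "\<psi> L = \<sigma> * pi"
proof -
  have "cis (\<psi> L - pi) = 1" using cL by (simp add: cis_divide[symmetric])
  then obtain m :: int where m: "\<psi> L - pi = 2 * pi * of_int m" using cis_eq_1_imp by blast
  have hit: False if "y \<in> closed_segment (\<psi> 0) (\<psi> L)" "\<sigma> * sin y < 0" for y
  proof -
    have "\<exists>t. 0 \<le> t \<and> t \<le> L \<and> \<psi> t = y"
    proof (cases "\<psi> 0 \<le> \<psi> L")
      case True then show ?thesis using that(1) IVT'[of \<psi> 0 y L, OF _ _ L cont]
        by (auto simp: closed_segment_eq_real_ivl)
    next
      case False then show ?thesis using that(1) IVT2'[of \<psi> L y 0, OF _ _ L cont]
        by (auto simp: closed_segment_eq_real_ivl)
    qed
    then show False using pos that(2) by force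
  qed
  consider "\<sigma> = 1" | "\<sigma> = -1" using sg by blast
  then show ?thesis
  proof cases
    case 1
    have "m = 0"
    proof (rule ccontr)
      assume "m \<noteq> 0"
      then consider "m \<ge> 1" | "m \<le> -1" by linarith
      then show False
      proof cases
        case 1
        then have "real_of_int m \<ge> 1" by simp
        have "2 * pi * 1 \<le> 2 * pi * real_of_int m" using \<open>real_of_int m \<ge> 1\<close> by (intro mult_left_mono) auto
        then have "\<psi> L \<ge> 3 * pi" using m by linarith
        then show False using hit[of "3 * pi / 2"] \<open>\<sigma> = 1\<close> p0 pi_gt_zero
          by (auto simp: closed_segment_eq_real_ivl sin_3pi2 intro: hit)
      next
        case 2
        then have "real_of_int m \<le> -1" by simp
        have "2 * pi * real_of_int m \<le> 2 * pi * (-1)" using \<open>real_of_int m \<le> -1\<close> by (intro mult_left_mono) auto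
        then have "\<psi> L \<le> - pi" using m by linarith
        then show False using hit[of "- pi / 2"] \<open>\<sigma> = 1\<close> p0 pi_gt_zero
          by (auto simp: closed_segment_eq_real_ivl)
      qed
    qed
    then show ?thesis using m 1 by simp
  next
    case 2
    have "m = -1"
    proof (rule ccontr)
      assume "m \<noteq> -1"
      then consider "m \<ge> 0" | "m \<le> -2" by linarith
      then show False
      proof cases
        case 1
        then have "real_of_int m \<ge> 0" by simp
        have "0 \<le> 2 * pi * real_of_int m" using \<open>real_of_int m \<ge> 0\<close> by simp
        then have "\<psi> L \<ge> pi" using m by linarith
        then show False using hit[of "pi / 2"] \<open>\<sigma> = -1\<close> p0 pi_gt_zero
          by (auto simp: closed_segment_eq_real_ivl)
      next
        case 2
        then have "real_of_int m \<le> -2" by simp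
        have "2 * pi * real_of_int m \<le> 2 * pi * (-2)" using \<open>real_of_int m \<le> -2\<close> by (intro mult_left_mono) auto
        then have "\<psi> L \<le> - 3 * pi" using m by linarith
        moreover have "sin (- 3 * pi / 2) = 1" using sin_3pi2 by (simp add: sin_minus[symmetric])
        ultimately show False using hit[of "- 3 * pi / 2"] \<open>\<sigma> = -1\<close> p0 pi_gt_zero
          by (auto simp: closed_segment_eq_real_ivl)
      qed
    qed
    then show ?thesis using m 2 by simp
  qed
qed




definition nv :: "complex \<Rightarrow> complex" where "nv w = w /\<^sub>R norm w"

lemma nrm_close:
  fixes w u :: complex and r e :: real
  assumes u: "norm u = 1" and r: "r \<noteq> 0" and le: "norm (w - r *\<^sub>R u) \<le> e * \<bar>r\<bar>" and e: "e < 1"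
  shows "norm (nv w - sgn r *\<^sub>R u) \<le> 2 * e"
proof -
  define w' where "w' = w /\<^sub>R \<bar>r\<bar>"
  have ar: "\<bar>r\<bar> > 0" using r by simp
  have "w' - sgn r *\<^sub>R u = (w - r *\<^sub>R u) /\<^sub>R \<bar>r\<bar>"
    unfolding w'_def using ar by (simp add: algebra_simps sgn_real_def scaleR_diff_right)
  then have "norm (w' - sgn r *\<^sub>R u) = norm (w - r *\<^sub>R u) / \<bar>r\<bar>" by (simp add: divide_inverse_commute)
  also have "\<dots> \<le> e" using le ar by (simp add: pos_divide_le_eq)
  finally have n1: "norm (w' - sgn r *\<^sub>R u) \<le> e" .
  have nsu: "norm (sgn r *\<^sub>R u) = 1" using u r by (simp add: abs_sgn)
  have "\<bar>norm w' - 1\<bar> \<le> e"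
    using norm_triangle_ineq3[of w' "sgn r *\<^sub>R u"] n1 nsu by simp
  then have nw': "norm w' > 0" using e by linarith
  have "nv w = nv w'"
    unfolding nv_def w'_def using ar by simp
  also have "norm (nv w' - w') = \<bar>norm w' - 1\<bar>"
  proof -
    have "nv w' - w' = (1 / norm w' - 1) *\<^sub>R w'" unfolding nv_def by (simp add: algebra_simps divide_inverse)
    then have "norm (nv w' - w') = \<bar>1 / norm w' - 1\<bar> * norm w'" by simp
    also have "\<dots> = \<bar>(1 / norm w' - 1) * norm w'\<bar>" using nw' by (simp add: abs_mult)
    also have "\<dots> = \<bar>norm w' - 1\<bar>" using nw' by (simp add: algebra_simps abs_minus_commute)
    finally show ?thesis .
  qed
  then have "norm (nv w' - sgn r *\<^sub>R u) \<le> \<bar>norm w' - 1\<bar> + norm (w' - sgn r *\<^sub>R u)"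
    using norm_triangle_ineq[of "nv w' - w'" "w' - sgn r *\<^sub>R u"] by simp
  finally show ?thesis using n1 \<open>\<bar>norm w' - 1\<bar> \<le> e\<close> by simp
qed

context oval begin

lemma sec:
  assumes e: "e > 0"
  shows "\<exists>d>0. \<forall>a b. \<bar>a - p\<bar> < d \<longrightarrow> \<bar>b - p\<bar> < d \<longrightarrow> norm (\<gamma> b - \<gamma> a - (b - a) *\<^sub>R T p) \<le> e * \<bar>b - a\<bar>"
proof -
  obtain d where d: "d > 0" "\<And>x. dist x p < d \<Longrightarrow> dist (T x) (T p) < e"
    using cT[of p] e unfolding continuous_at_eps_delta by blast
  have "norm (\<gamma> b - \<gamma> a - (b - a) *\<^sub>R T p) \<le> e * \<bar>b - a\<bar>" if ab: "\<bar>a - p\<bar> < d" "\<bar>b - p\<bar> < d" for a b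
  proof -
    have "norm (\<gamma> b - \<gamma> a - (\<lambda>h. h *\<^sub>R T p) (b - a)) \<le> norm (b - a) * e"
    proof (rule differentiable_bound_linearization[where S = "ball p d" and f' = "\<lambda>x h. h *\<^sub>R T x"])
      show "a + t *\<^sub>R (b - a) \<in> ball p d" if "t \<in> {0..1}" for t
      proof -
        have "a \<in> ball p d" "b \<in> ball p d" using ab by (auto simp: dist_real_def abs_minus_commute)
        then have "(1 - t) *\<^sub>R a + t *\<^sub>R b \<in> ball p d" using that convex_ball[of p d] unfolding convex_alt by auto
        then show ?thesis by (simp add: algebra_simps)
      qed
      show "(\<gamma> has_derivative (\<lambda>h. h *\<^sub>R T x)) (at x within ball p d)" for x
        using dgamma[of x] unfolding has_vector_derivative_def by (rule has_derivative_at_withinI)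
      show "onorm ((\<lambda>h. h *\<^sub>R T x) - (\<lambda>h. h *\<^sub>R T p)) \<le> e" if "x \<in> ball p d" for x
      proof -
        have "(\<lambda>h. h *\<^sub>R T x) - (\<lambda>h. h *\<^sub>R T p) = (\<lambda>h. h *\<^sub>R (T x - T p))"
          by (auto simp: fun_eq_iff algebra_simps)
        moreover have "onorm (\<lambda>h::real. h *\<^sub>R (T x - T p)) = norm (T x - T p)"
          using onorm_scaleR_left[of "\<lambda>h::real. h" "T x - T p"] onorm_id[where 'a=real] bounded_linear_ident by simp
        moreover have "norm (T x - T p) < e" using d(2)[of x] that by (simp add: dist_norm dist_commute)
        ultimately show ?thesis by simp
      qed
      show "p \<in> ball p d" using d by simp
    qed
    then show ?thesis by (simp add: mult.commute)
  qed
  then show ?thesis using d(1) by blast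
qed

end



context oval begin

definition "Tri = {z::real\<times>real. 0 \<le> fst z \<and> fst z \<le> snd z \<and> snd z \<le> L}"

definition "Fs s0 z = (if fst z = snd z then T (s0 + fst z) else if z = (0, L) then - T s0
   else nv (\<gamma> (s0 + snd z) - \<gamma> (s0 + fst z)))"

lemma Tri_convex: "convex Tri"
  unfolding convex_alt
proof (intro ballI allI impI)
  fix x y :: "real \<times> real" and u :: real
  assume x: "x \<in> Tri" and y: "y \<in> Tri" and u: "0 \<le> u \<and> u \<le> 1"
  obtain a1 a2 where xe: "x = (a1, a2)" by fastforce
  obtain b1 b2 where ye: "y = (b1, b2)" by fastforce
  have h: "0 \<le> a1" "a1 \<le> a2" "a2 \<le> L" "0 \<le> b1" "b1 \<le> b2" "b2 \<le> L" "0 \<le> u" "u \<le> 1"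
    using x y u xe ye unfolding Tri_def by auto
  have "(1 - u) * a1 \<le> (1 - u) * a2" "u * b1 \<le> u * b2" "(1 - u) * a2 \<le> (1 - u) * L" "u * b2 \<le> u * L"
    using h by (auto intro: mult_left_mono)
  moreover have "0 \<le> (1 - u) * a1" "0 \<le> u * b1" using h by auto
  ultimately show "(1 - u) *\<^sub>R x + u *\<^sub>R y \<in> Tri" unfolding Tri_def xe ye
    by (simp add: algebra_simps)
qed

lemma tri_neq:
  assumes "z \<in> Tri" "fst z \<noteq> snd z" "z \<noteq> (0, L)"
  shows "\<gamma> (s0 + snd z) \<noteq> \<gamma> (s0 + fst z)"
proof
  assume "\<gamma> (s0 + snd z) = \<gamma> (s0 + fst z)"
  then obtain n :: int where n: "s0 + fst z = s0 + snd z + of_int n * L" using gamma_eq_imp by blast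
  have lt: "fst z < snd z" "snd z - fst z < L"
    using assms unfolding Tri_def by (auto simp: prod_eq_iff)
  have a: "of_int n * L < 0" "- L < of_int n * L" using n lt by auto
  have "n \<ge> 0 \<or> n \<le> -1" by linarith
  then show False
  proof
    assume "n \<ge> 0" then have "of_int n * L \<ge> 0" using L_pos by simp
    then show False using a by linarith
  next
    assume "n \<le> -1" then have "of_int n * L \<le> (-1) * L" using L_pos by (intro mult_right_mono) auto
    then show False using a by linarith
  qed
qed

lemma nv_norm: "w \<noteq> 0 \<Longrightarrow> norm (nv w) = 1"
  unfolding nv_def by simp

lemma F_unit: "z \<in> Tri \<Longrightarrow> norm (Fs s0 z) = 1"
proof -
  assume z: "z \<in> Tri"
  consider "fst z = snd z" | "fst z \<noteq> snd z" "z = (0, L)" | "fst z \<noteq> snd z" "z \<noteq> (0, L)" by blast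
  then show ?thesis
  proof cases
    case 1 then show ?thesis unfolding Fs_def using unitT by simp
  next
    case 2 then show ?thesis unfolding Fs_def using unitT by simp
  next
    case 3 then show ?thesis unfolding Fs_def using tri_neq[OF z 3] by (simp add: nv_norm)
  qed
qed

lemma F_cont: "continuous_on Tri (Fs s0)"
  unfolding continuous_on_eq_continuous_within
proof
  fix z assume zT: "z \<in> Tri"
  obtain s t where z: "z = (s, t)" by fastforce
  have st: "0 \<le> s" "s \<le> t" "t \<le> L" using zT z unfolding Tri_def by auto
  show "continuous (at z within Tri) (Fs s0)"
  proof (cases "s = t")
    case True
    show ?thesis unfolding continuous_within_eps_delta
    proof (intro allI impI)
      fix \<epsilon> :: real assume \<epsilon>: "\<epsilon> > 0"
      define e' where "e' = min (\<epsilon> / 4) (1 / 4)"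
      have e': "e' > 0" "e' < 1" "2 * e' < \<epsilon>" using \<epsilon> unfolding e'_def by auto
      obtain d1 where d1: "d1 > 0" "\<And>a b. \<bar>a - (s0 + s)\<bar> < d1 \<Longrightarrow> \<bar>b - (s0 + s)\<bar> < d1 \<Longrightarrow>
          norm (\<gamma> b - \<gamma> a - (b - a) *\<^sub>R T (s0 + s)) \<le> e' * \<bar>b - a\<bar>"
        using sec[OF e'(1), of "s0 + s"] by blast
      obtain d2 where d2: "d2 > 0" "\<And>x. dist x (s0 + s) < d2 \<Longrightarrow> dist (T x) (T (s0 + s)) < \<epsilon>"
        using cT[of "s0 + s"] \<epsilon> unfolding continuous_at_eps_delta by blast
      define d where "d = min (min d1 d2) (L / 2)"
      have d: "d > 0" using d1 d2 L_pos unfolding d_def by auto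
      have "dist (Fs s0 z') (Fs s0 z) < \<epsilon>" if z': "z' \<in> Tri" "dist z' z < d" for z'
      proof -
        obtain s' t' where z'e: "z' = (s', t')" by fastforce
        have st': "0 \<le> s'" "s' \<le> t'" "t' \<le> L" using z' z'e unfolding Tri_def by auto
        have ds: "\<bar>s' - s\<bar> < d" "\<bar>t' - t\<bar> < d"
          using dist_fst_le[of z' z] dist_snd_le[of z' z] z' z z'e by (auto simp: dist_real_def)
        have Fz: "Fs s0 z = T (s0 + s)" unfolding Fs_def z using True by simp
        consider "s' = t'" | "s' \<noteq> t'" "z' = (0, L)" | "s' \<noteq> t'" "z' \<noteq> (0, L)" by blast
        then show ?thesis
        proof cases
          case 1
          then have "Fs s0 z' = T (s0 + s')" unfolding Fs_def z'e by simp
          moreover have "dist (s0 + s') (s0 + s) < d2" using ds d_def by (simp add: dist_real_def)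
          ultimately show ?thesis using d2(2) Fz by simp
        next
          case 2
          then have "\<bar>0 - s\<bar> < L / 2" "\<bar>L - t\<bar> < L / 2" using ds z'e d_def by auto
          then show ?thesis using True by linarith
        next
          case 3
          then have F': "Fs s0 z' = nv (\<gamma> (s0 + t') - \<gamma> (s0 + s'))" unfolding Fs_def using z'e by auto
          have r: "t' - s' \<noteq> 0" "t' - s' > 0" using 3 st' by auto
          have "norm (\<gamma> (s0 + t') - \<gamma> (s0 + s') - ((s0 + t') - (s0 + s')) *\<^sub>R T (s0 + s)) \<le> e' * \<bar>(s0 + t') - (s0 + s')\<bar>"
            using d1(2)[of "s0 + s'" "s0 + t'"] ds True d_def by auto
          then have "norm (\<gamma> (s0 + t') - \<gamma> (s0 + s') - (t' - s') *\<^sub>R T (s0 + s)) \<le> e' * \<bar>t' - s'\<bar>" by simp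
          from nrm_close[OF unitT r(1) this e'(2)]
          have "norm (nv (\<gamma> (s0 + t') - \<gamma> (s0 + s')) - T (s0 + s)) \<le> 2 * e'" using r by simp
          then show ?thesis using F' Fz e' by (simp add: dist_norm)
        qed
      qed
      then show "\<exists>d>0. \<forall>z'\<in>Tri. dist z' z < d \<longrightarrow> dist (Fs s0 z') (Fs s0 z) < \<epsilon>" using d by blast
    qed
  next
    case False
    note ne = False
    show ?thesis
    proof (cases "z = (0, L)")
      case True
      show ?thesis unfolding continuous_within_eps_delta
      proof (intro allI impI)
        fix \<epsilon> :: real assume \<epsilon>: "\<epsilon> > 0"
        define e' where "e' = min (\<epsilon> / 4) (1 / 4)"
        have e': "e' > 0" "e' < 1" "2 * e' < \<epsilon>" using \<epsilon> unfolding e'_def by auto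
        obtain d1 where d1: "d1 > 0" "\<And>a b. \<bar>a - s0\<bar> < d1 \<Longrightarrow> \<bar>b - s0\<bar> < d1 \<Longrightarrow>
            norm (\<gamma> b - \<gamma> a - (b - a) *\<^sub>R T s0) \<le> e' * \<bar>b - a\<bar>"
          using sec[OF e'(1), of "s0"] by blast
        define d where "d = min d1 (L / 2)"
        have d: "d > 0" using d1 L_pos unfolding d_def by auto
        have Fz: "Fs s0 z = - T s0" unfolding Fs_def using True L_pos by simp
        have "dist (Fs s0 z') (Fs s0 z) < \<epsilon>" if z': "z' \<in> Tri" "dist z' z < d" for z'
        proof -
          obtain s' t' where z'e: "z' = (s', t')" by fastforce
          have st': "0 \<le> s'" "s' \<le> t'" "t' \<le> L" using z' z'e unfolding Tri_def by auto
          have ds: "\<bar>s' - 0\<bar> < d" "\<bar>t' - L\<bar> < d"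
            using dist_fst_le[of z' z] dist_snd_le[of z' z] z' True z'e by (auto simp: dist_real_def)
          consider "z' = (0, L)" | "s' = t'" | "s' \<noteq> t'" "z' \<noteq> (0, L)" by blast
          then show ?thesis
          proof cases
            case 1 then show ?thesis using True \<epsilon> by simp
          next
            case 2 then show ?thesis using ds d_def by linarith
          next
            case 3
            then have F': "Fs s0 z' = nv (\<gamma> (s0 + t') - \<gamma> (s0 + s'))" unfolding Fs_def using z'e by auto
            have pe: "\<gamma> (s0 + t') = \<gamma> (s0 + (t' - L))" using per[of "s0 + (t' - L)"] by simp
            have neg: "(s0 + (t' - L)) - (s0 + s') < 0" using 3 st' z'e by auto
            then have r: "(s0 + (t' - L)) - (s0 + s') \<noteq> 0" by simp
            have "norm (\<gamma> (s0 + (t' - L)) - \<gamma> (s0 + s') - ((s0 + (t' - L)) - (s0 + s')) *\<^sub>R T s0)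
                  \<le> e' * \<bar>(s0 + (t' - L)) - (s0 + s')\<bar>"
              using d1(2)[of "s0 + s'" "s0 + (t' - L)"] ds d_def by auto
            from nrm_close[OF unitT r this e'(2)]
            have "norm (nv (\<gamma> (s0 + (t' - L)) - \<gamma> (s0 + s')) + T s0) \<le> 2 * e'" using neg by simp
            then show ?thesis using F' Fz e' pe by (simp add: dist_norm)
          qed
        qed
        then show "\<exists>d>0. \<forall>z'\<in>Tri. dist z' z < d \<longrightarrow> dist (Fs s0 z') (Fs s0 z) < \<epsilon>" using d by blast
      qed
    next
      case False
      define H where "H z' = nv (\<gamma> (s0 + snd z') - \<gamma> (s0 + fst z'))" for z'
      have nz: "\<gamma> (s0 + snd z) - \<gamma> (s0 + fst z) \<noteq> 0" using tri_neq[OF zT] ne False z by simp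
      have c1: "isCont (\<lambda>z::real\<times>real. \<gamma> (s0 + snd z)) z"
        by (rule isCont_o2[OF _ cgamma]) (intro continuous_intros)
      have c2: "isCont (\<lambda>z::real\<times>real. \<gamma> (s0 + fst z)) z"
        by (rule isCont_o2[OF _ cgamma]) (intro continuous_intros)
      have "isCont H z" unfolding H_def[abs_def] nv_def
        using c1 c2 nz by (intro continuous_intros) auto
      then have cH: "continuous (at z within Tri) H" by (rule continuous_at_imp_continuous_at_within)
      have dpos: "min ((t - s) / 2) (dist z (0, L)) > 0" using ne False st z by auto
      show ?thesis
      proof (rule continuous_transform_within[OF cH dpos zT])
        fix z' assume z': "z' \<in> Tri" "dist z' z < min ((t - s) / 2) (dist z (0, L))"
        have "\<bar>fst z' - s\<bar> < (t - s) / 2" "\<bar>snd z' - t\<bar> < (t - s) / 2"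
          using dist_fst_le[of z' z] dist_snd_le[of z' z] z' z by (auto simp: dist_real_def)
        then have "fst z' < snd z'" by argo
        then have "fst z' \<noteq> snd z'" by simp
        moreover have "z' \<noteq> (0, L)" using z' by (auto simp: dist_commute)
        ultimately show "H z' = Fs s0 z'" unfolding H_def Fs_def by simp
      qed
    qed
  qed
qed

end



context oval begin

definition "th = (SOME \<theta>. (\<forall>t. T t = cis (\<theta> t)) \<and> (\<forall>t. (\<theta> has_real_derivative k t) (at t)))"

lemma th_props: "(\<forall>t. T t = cis (th t)) \<and> (\<forall>t. (th has_real_derivative k t) (at t))"
  unfolding th_def by (rule someI_ex[OF theta_exists])

lemma T_th: "T t = cis (th t)" using th_props by blast
lemma d_th: "(th has_real_derivative k t) (at t)" using th_props by blast
lemma th_mono: "a < b \<Longrightarrow> th a < th b"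
  using DERIV_pos_imp_increasing[of a b th] d_th k_pos by blast
lemma th_cont: "continuous_on A th"
  using d_th by (meson DERIV_continuous continuous_at_imp_continuous_on)

lemma Im_nv: "Im (nv w) = Im w / norm w" unfolding nv_def by (simp add: divide_inverse mult.commute)

lemma Y_per_int: "Y (t + of_int n * L) = Y t"
  unfolding Y_def cy_def using per_int by simp

lemma turn_s0: "\<exists>s0. th (s0 + L) - th s0 = 2 * pi"
proof -
  have cY': "continuous_on {0..L} Y" using cY by (simp add: continuous_at_imp_continuous_on)
  obtain s0 where s0: "s0 \<in> {0..L}" "\<forall>y\<in>{0..L}. Y s0 \<le> Y y"
    using continuous_attains_inf[OF compact_Icc _ cY'] L_pos by auto
  have Ymin: "Y s0 \<le> Y t" for t
  proof -
    obtain n :: int where n: "t - of_int n * L \<in> {0..<L}" using red by blast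
    have "Y (t - of_int n * L) = Y t" using Y_per_int[of "t - of_int n * L" n] by simp
    moreover have "t - of_int n * L \<in> {0..L}" using n by auto
    then have "Y s0 \<le> Y (t - of_int n * L)" using s0(2) by blast
    ultimately show ?thesis by simp
  qed
  have Q0: "Q s0 = 0" using DERIV_local_min[OF dY, of 1 s0] Ymin by auto
  define \<sigma> where "\<sigma> = P s0"
  have "\<sigma>\<^sup>2 = 1" using unit[of s0] Q0 unfolding \<sigma>_def by simp
  then have sg: "\<sigma> = 1 \<or> \<sigma> = -1" by (metis power2_eq_1_iff)
  have sq: "\<sigma> * \<sigma> = 1" using sg by auto
  have Ts0: "T s0 = of_real \<sigma>" unfolding T_def \<sigma>_def using Q0 by (simp add: complex_eq_iff)
  define F where "F = Fs s0"
  have cF: "continuous_on Tri F" unfolding F_def by (rule F_cont)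
  have nF: "z \<in> Tri \<Longrightarrow> F z \<noteq> 0" for z using F_unit[of z s0] unfolding F_def by auto
  have "\<exists>G. continuous_on Tri G \<and> (\<forall>z\<in>Tri. F z = exp (G z))"
    by (rule continuous_logarithm_on_contractible[OF cF convex_imp_contractible[OF Tri_convex] nF]) auto
  then obtain G where G: "continuous_on Tri G" "\<And>z. z \<in> Tri \<Longrightarrow> F z = exp (G z)" by blast
  define \<phi> where "\<phi> z = Im (G z)" for z
  have c\<phi>: "continuous_on Tri \<phi>" unfolding \<phi>_def[abs_def] using G(1) by (rule continuous_on_Im)
  have cis\<phi>: "cis (\<phi> z) = F z" if "z \<in> Tri" for z
  proof -
    have "norm (F z) = 1" using F_unit[OF that] unfolding F_def .
    then have "Re (G z) = 0" using G(2)[OF that] by simp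
    then have "G z = \<i> * of_real (\<phi> z)" unfolding \<phi>_def by (simp add: complex_eq_iff)
    then show ?thesis using G(2)[OF that] by (simp add: cis_conv_exp)
  qed
  have inT: "(s, s) \<in> Tri" "(0, s) \<in> Tri" "(s, L) \<in> Tri" if "s \<in> {0..L}" for s
    using that unfolding Tri_def by auto
  have cd: "continuous_on {0..L} (\<lambda>s. \<phi> (s, s))"
    by (rule continuous_on_compose2[OF c\<phi>]) (auto intro!: continuous_intros inT)
  have c1: "continuous_on {0..L} (\<lambda>s. \<phi> (0, s) - \<phi> (0, 0))"
    by (intro continuous_intros continuous_on_compose2[OF c\<phi>]) (auto intro!: continuous_intros inT)
  have c2: "continuous_on {0..L} (\<lambda>s. \<phi> (s, L) - \<phi> (0, L))"
    by (intro continuous_intros continuous_on_compose2[OF c\<phi>]) (auto intro!: continuous_intros inT)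
  have L0: "0 \<in> {0..L}" "L \<in> {0..L}" using L_pos by auto
  have diag: "\<phi> (L, L) - th (s0 + L) = \<phi> (0, 0) - th s0"
  proof -
    have "\<phi> (L, L) - th (s0 + L) = \<phi> (0, 0) - th (s0 + 0)"
    proof (rule lift_diff_const[where f = "\<lambda>s. \<phi> (s, s)" and g = "\<lambda>s. th (s0 + s)"])
      show "continuous_on {0..L} (\<lambda>s. th (s0 + s))"
        by (rule continuous_on_compose2[OF th_cont[of UNIV]]) (auto intro!: continuous_intros)
      show "cis (\<phi> (s, s)) = cis (th (s0 + s))" if "s \<in> {0..L}" for s
        using cis\<phi>[OF inT(1)[OF that]] T_th[of "s0 + s"] unfolding F_def Fs_def by simp
    qed (use cd L_pos in auto)
    then show ?thesis by simp
  qed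
  have e1: "\<phi> (0, L) - \<phi> (0, 0) = \<sigma> * pi"
  proof -
    have "(\<lambda>s. \<phi> (0, s) - \<phi> (0, 0)) L = \<sigma> * pi"
    proof (rule edge_lemma[OF c1 _ _ _ sg])
      show "0 \<le> L" using L_pos by simp
      show "\<phi> (0, 0) - \<phi> (0, 0) = 0" by simp
      have "cis (\<phi> (0, L) - \<phi> (0, 0)) = F (0, L) / F (0, 0)"
        using cis\<phi>[OF inT(2)[OF L0(2)]] cis\<phi>[OF inT(2)[OF L0(1)]] by (simp add: cis_divide[symmetric])
      also have "\<dots> = -1" unfolding F_def Fs_def using L_pos T_nz[of s0] by simp
      finally show "cis (\<phi> (0, L) - \<phi> (0, 0)) = -1" .
      fix t assume t: "t \<in> {0..L}"
      have imF: "Im (F (0, t)) \<ge> 0"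
      proof -
        consider "t = 0" | "t \<noteq> 0" "t = L" | "t \<noteq> 0" "t \<noteq> L" by blast
        then show ?thesis
        proof cases
          case 1 then show ?thesis unfolding F_def Fs_def using Ts0 by simp
        next
          case 2 then show ?thesis unfolding F_def Fs_def Ts0 by simp
        next
          case 3
          then have "F (0, t) = nv (\<gamma> (s0 + t) - \<gamma> s0)" unfolding F_def Fs_def by simp
          moreover have "Im (\<gamma> (s0 + t) - \<gamma> s0) \<ge> 0" using Ymin[of "s0 + t"] by (simp add: gamma_eq)
          ultimately show ?thesis by (simp add: Im_nv)
        qed
      qed
      have "sin (\<phi> (0, t) - \<phi> (0, 0)) = Im (cis (\<phi> (0, t) - \<phi> (0, 0)))" by simp
      also have "\<dots> = Im (F (0, t) / F (0, 0))"
        using cis\<phi>[OF inT(2)[OF t]] cis\<phi>[OF inT(2)[OF L0(1)]] by (simp add: cis_divide[symmetric])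
      also have "\<dots> = Im (F (0, t)) / \<sigma>"
      proof -
        have "F (0, 0) = of_real \<sigma>" unfolding F_def Fs_def using Ts0 by simp
        then show ?thesis by (simp only: Im_divide_of_real)
      qed
      finally have "\<sigma> * sin (\<phi> (0, t) - \<phi> (0, 0)) = Im (F (0, t))" using sg by auto
      then show "0 \<le> \<sigma> * sin (\<phi> (0, t) - \<phi> (0, 0))" using imF by simp
    qed
    then show ?thesis by simp
  qed
  have e2: "\<phi> (L, L) - \<phi> (0, L) = \<sigma> * pi"
  proof -
    have "(\<lambda>s. \<phi> (s, L) - \<phi> (0, L)) L = \<sigma> * pi"
    proof (rule edge_lemma[OF c2 _ _ _ sg])
      show "0 \<le> L" using L_pos by simp
      show "\<phi> (0, L) - \<phi> (0, L) = 0" by simp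
      have "cis (\<phi> (L, L) - \<phi> (0, L)) = F (L, L) / F (0, L)"
        using cis\<phi>[OF inT(3)[OF L0(2)]] cis\<phi>[OF inT(3)[OF L0(1)]] by (simp add: cis_divide[symmetric])
      also have "\<dots> = -1" unfolding F_def Fs_def using L_pos T_nz[of s0] perT[of s0] by (simp add: add.commute)
      finally show "cis (\<phi> (L, L) - \<phi> (0, L)) = -1" .
      fix t assume t: "t \<in> {0..L}"
      have imF: "Im (F (t, L)) \<le> 0"
      proof -
        consider "t = 0" | "t \<noteq> 0" "t = L" | "t \<noteq> 0" "t \<noteq> L" by blast
        then show ?thesis
        proof cases
          case 1 then show ?thesis unfolding F_def Fs_def Ts0 using L_pos by simp
        next
          case 2 then show ?thesis unfolding F_def Fs_def using perT[of s0] by (simp add: add.commute Ts0)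
        next
          case 3
          then have "F (t, L) = nv (\<gamma> (s0 + L) - \<gamma> (s0 + t))" unfolding F_def Fs_def by simp
          moreover have "\<gamma> (s0 + L) = \<gamma> s0" using per[of s0] .
          moreover have "Im (\<gamma> s0 - \<gamma> (s0 + t)) \<le> 0" using Ymin[of "s0 + t"] by (simp add: gamma_eq)
          ultimately show ?thesis by (simp add: Im_nv divide_nonpos_nonneg)
        qed
      qed
      have F0L: "F (0, L) = of_real (- \<sigma>)" unfolding F_def Fs_def Ts0 using L_pos by simp
      have "sin (\<phi> (t, L) - \<phi> (0, L)) = Im (cis (\<phi> (t, L) - \<phi> (0, L)))" by simp
      also have "\<dots> = Im (F (t, L) / F (0, L))"
        using cis\<phi>[OF inT(3)[OF t]] cis\<phi>[OF inT(3)[OF L0(1)]] by (simp add: cis_divide[symmetric])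
      also have "\<dots> = Im (F (t, L)) / (- \<sigma>)" unfolding F0L by (simp only: Im_divide_of_real)
      finally have "\<sigma> * sin (\<phi> (t, L) - \<phi> (0, L)) = - Im (F (t, L))" using sg by auto
      then show "0 \<le> \<sigma> * sin (\<phi> (t, L) - \<phi> (0, L))" using imF by simp
    qed
    then show ?thesis by simp
  qed
  have tot: "th (s0 + L) - th s0 = 2 * \<sigma> * pi" using diag e1 e2 by simp
  have "th (s0 + L) - th s0 > 0" using th_mono[of s0 "s0 + L"] L_pos by simp
  then have "\<sigma> = 1" using tot sg pi_gt_zero by (auto simp: mult_less_0_iff)
  then show ?thesis using tot by auto
qed

lemma turn: "th (t + L) = th t + 2 * pi"
proof -
  obtain s0 where s0: "th (s0 + L) - th s0 = 2 * pi" using turn_s0 by blast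
  have "((\<lambda>t. th (t + L) - th t) has_real_derivative 0) (at x)" for x
  proof -
    have "((\<lambda>t. th (t + L) - th t) has_real_derivative (k (x + L) - k x)) (at x)"
      using DERIV_shift[THEN iffD1, OF d_th[of "x + L"]] d_th[of x] by (intro derivative_intros) auto
    then show ?thesis using perk by simp
  qed
  then have "th (t + L) - th t = th (s0 + L) - th s0" using DERIV_isconst_all by blast
  then show ?thesis using s0 by simp
qed

end



context oval begin

lemma T_per_nat: "T (t + real n * L) = T t"
proof (induction n arbitrary: t)
  case (Suc n) then show ?case using perT[of "t + real n * L"] by (simp add: algebra_simps)
qed simp

lemma T_per_int: "T (t + of_int n * L) = T t"
proof (cases "n \<ge> 0")
  case True then show ?thesis using T_per_nat[of t "nat n"] by simp
next
  case False
  then have "T (t + of_int n * L) = T (t + of_int n * L + real (nat (-n)) * L)"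
    using T_per_nat[of "t + of_int n * L" "nat (-n)"] by simp
  also have "\<dots> = T t" using False by (simp add: algebra_simps)
  finally show ?thesis .
qed

lemma cnjT_T: "Im (cnj (T a) * T b) = sin (th b - th a)"
  unfolding T_th by (simp add: sin_diff)

lemma convex_side:
  assumes "\<not> (\<exists>n::int. x' = x + of_int n * L)"
  shows "Im (cnj (T x) * (\<gamma> x' - \<gamma> x)) > 0"
proof -
  obtain n :: int where n: "x' - x - of_int n * L \<in> {0..<L}" using red by blast
  define y where "y = x' - of_int n * L"
  have gy: "\<gamma> y = \<gamma> x'" unfolding y_def using per_int[of "x' - of_int n * L" n] by simp
  have "y \<noteq> x" using assms unfolding y_def by (metis add.commute diff_add_cancel)
  then have y: "x < y" "y < x + L" using n unfolding y_def by auto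
  define h where "h t = Im (cnj (T x) * (\<gamma> t - \<gamma> x))" for t
  have dh: "(h has_real_derivative sin (th t - th x)) (at t)" for t
  proof -
    have "((\<lambda>t. cnj (T x) * (\<gamma> t - \<gamma> x)) has_vector_derivative cnj (T x) * T t) (at t)"
      using dgamma[of t] by (auto intro!: derivative_eq_intros)
    then show ?thesis unfolding h_def[abs_def] has_vector_derivative_complex_iff cnjT_T by simp
  qed
  have ch: "continuous_on A h" for A using dh by (meson DERIV_continuous continuous_at_imp_continuous_on)
  have hx: "h x = 0" unfolding h_def by simp
  have hxL: "h (x + L) = 0" unfolding h_def using per by simp
  show ?thesis
  proof (cases "th y - th x \<le> pi")
    case True
    have "h x < h y"
    proof (rule DERIV_pos_imp_increasing_open[OF y(1) _ ch])
      fix t assume t: "x < t" "t < y"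
      have "0 < th t - th x" "th t - th x < pi" using th_mono[OF t(1)] th_mono[OF t(2)] True by auto
      then have "sin (th t - th x) > 0" by (rule sin_gt_zero)
      then show "\<exists>y. (h has_real_derivative y) (at t) \<and> 0 < y" using dh by blast
    qed
    then show ?thesis using hx gy unfolding h_def by simp
  next
    case False
    have "h (x + L) < h y"
    proof (rule DERIV_neg_imp_decreasing_open[OF y(2) _ ch])
      fix t assume t: "y < t" "t < x + L"
      have "pi < th t - th x" "th t - th x < 2 * pi" using th_mono[OF t(1)] th_mono[OF t(2)] False turn[of x] by auto
      then have "sin (th t - th x - pi) > 0" by (intro sin_gt_zero) auto
      then have "sin (th t - th x) < 0" by (simp add: sin_diff)
      then show "\<exists>y. (h has_real_derivative y) (at t) \<and> y < 0" using dh by blast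
    qed
    then show ?thesis using hxL gy unfolding h_def by simp
  qed
qed

end



lemma DERIV_eqE: "(f has_real_derivative D) F \<Longrightarrow> D = E \<Longrightarrow> (f has_real_derivative E) F" by simp

context oval begin

definition "sc u v = P u * Q v - Q u * P v"
definition "cc u v = P u * P v + Q u * Q v"
definition "na u v = (X v - X u) * Q v - (Y v - Y u) * P v"
definition "nb u v = P u * (Y v - Y u) - Q u * (X v - X u)"
definition "dtt u v = P u * (X v - X u) + Q u * (Y v - Y u)"
definition "dvv u v = (X v - X u) * P v + (Y v - Y u) * Q v"
definition "ad u v = na u v / sc u v"
definition "bd u v = nb u v / sc u v"
definition "Hv u v = 1 + k v * nb u v * (1 - cc u v) / (sc u v)\<^sup>2"

lemma I1: "(sc u v)\<^sup>2 + (cc u v)\<^sup>2 = 1"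
proof -
  have "(sc u v)\<^sup>2 + (cc u v)\<^sup>2 = ((P u)\<^sup>2 + (Q u)\<^sup>2) * ((P v)\<^sup>2 + (Q v)\<^sup>2)"
    unfolding sc_def cc_def by (simp add: power2_eq_square algebra_simps)
  then show ?thesis using unit by simp
qed

lemma I2: "dvv u v * sc u v - na u v * cc u v = nb u v"
proof -
  have "dvv u v * sc u v - na u v * cc u v = ((P v)\<^sup>2 + (Q v)\<^sup>2) * nb u v"
    unfolding sc_def cc_def dvv_def na_def nb_def by (simp add: power2_eq_square algebra_simps)
  then show ?thesis using unit by simp
qed

lemma I3: "dtt u v * sc u v - nb u v * cc u v = na u v"
proof -
  have "dtt u v * sc u v - nb u v * cc u v = ((P u)\<^sup>2 + (Q u)\<^sup>2) * na u v"
    unfolding sc_def cc_def dtt_def na_def nb_def by (simp add: power2_eq_square algebra_simps)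
  then show ?thesis using unit by simp
qed

lemma cc_ne: "sc u v \<noteq> 0 \<Longrightarrow> 1 + cc u v \<noteq> 0"
proof
  assume "sc u v \<noteq> 0" "1 + cc u v = 0"
  then have "cc u v = -1" by simp
  then have "(sc u v)\<^sup>2 = 0" using I1[of u v] by simp
  then show False using \<open>sc u v \<noteq> 0\<close> by simp
qed

lemma dXc: "((\<lambda>v. X v - X u) has_real_derivative P v) (at v)"
  using DERIV_diff[OF dX DERIV_const] by simp
lemma dYc: "((\<lambda>v. Y v - Y u) has_real_derivative Q v) (at v)"
  using DERIV_diff[OF dY DERIV_const] by simp
lemma dXc': "((\<lambda>u. X v - X u) has_real_derivative - P u) (at u)"
  using DERIV_diff[OF DERIV_const dX] by simp
lemma dYc': "((\<lambda>u. Y v - Y u) has_real_derivative - Q u) (at u)"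
  using DERIV_diff[OF DERIV_const dY] by simp

lemma Dv_na: "((\<lambda>v. na u v) has_real_derivative k v * dvv u v) (at v)"
  unfolding na_def dvv_def
  by (rule DERIV_eqE[OF DERIV_diff[OF DERIV_mult[OF dXc dQ] DERIV_mult[OF dYc dP]]])
     (simp add: P2_eq Q2_eq algebra_simps)

lemma Dv_sc: "((\<lambda>v. sc u v) has_real_derivative k v * cc u v) (at v)"
  unfolding sc_def cc_def
  by (rule DERIV_eqE[OF DERIV_diff[OF DERIV_mult[OF DERIV_const dQ] DERIV_mult[OF DERIV_const dP]]])
     (simp add: P2_eq Q2_eq algebra_simps)

lemma Dv_nb: "((\<lambda>v. nb u v) has_real_derivative sc u v) (at v)"
  unfolding nb_def sc_def
  by (rule DERIV_eqE[OF DERIV_diff[OF DERIV_mult[OF DERIV_const dYc] DERIV_mult[OF DERIV_const dXc]]])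
     (simp add: algebra_simps)

lemma Du_na: "((\<lambda>u. na u v) has_real_derivative - sc u v) (at u)"
  unfolding na_def sc_def
  by (rule DERIV_eqE[OF DERIV_diff[OF DERIV_mult[OF dXc' DERIV_const] DERIV_mult[OF dYc' DERIV_const]]])
     (simp add: algebra_simps)

lemma Du_sc: "((\<lambda>u. sc u v) has_real_derivative - k u * cc u v) (at u)"
  unfolding sc_def cc_def
  by (rule DERIV_eqE[OF DERIV_diff[OF DERIV_mult[OF dP DERIV_const] DERIV_mult[OF dQ DERIV_const]]])
     (simp add: P2_eq Q2_eq algebra_simps)

lemma Du_nb: "((\<lambda>u. nb u v) has_real_derivative - k u * dtt u v) (at u)"
  unfolding nb_def dtt_def
  by (rule DERIV_eqE[OF DERIV_diff[OF DERIV_mult[OF dP dYc'] DERIV_mult[OF dQ dXc']]])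
     (simp add: P2_eq Q2_eq algebra_simps)

lemma Du_cc: "((\<lambda>u. cc u v) has_real_derivative k u * sc u v) (at u)"
  unfolding sc_def cc_def
  by (rule DERIV_eqE[OF DERIV_add[OF DERIV_mult[OF dP DERIV_const] DERIV_mult[OF dQ DERIV_const]]])
     (simp add: P2_eq Q2_eq algebra_simps)

end



lemma alg_H:
  fixes s c m n d K V :: real
  assumes s: "s \<noteq> 0" and c: "1 + c \<noteq> 0" and sc: "c\<^sup>2 + s\<^sup>2 = 1" and ds: "d * s = m + c * n"
  shows "0 + (((0 * n + - K * d * V) * (1 - c) + (0 - K * s) * (V * n)) * (s * s) - V * n * (1 - c) * (- K * c * s + - K * c * s)) / (s * s * (s * s)) = - K * V * (m + n) / (s * (1 + c))"
proof -
  have m: "m = d * s - c * n" using ds by simp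
  have ss: "s * s = 1 - c * c" using sc by (simp add: power2_eq_square)
  have eq: "(((0 * n + - K * d * V) * (1 - c) + (0 - K * s) * (V * n)) * (s * s) - V * n * (1 - c) * (- K * c * s + - K * c * s)) * (s * (1 + c))
        = (- K * V * (m + n)) * (s * s * (s * s))"
    unfolding m using sc by algebra
  have ne: "s * s * (s * s) \<noteq> 0" "s * (1 + c) \<noteq> 0" using s c by auto
  show ?thesis unfolding add_0_left by (rule iffD2[OF frac_eq_eq[OF ne]]) (rule eq)
qed

context oval begin

lemma Dv_ad: "sc u v \<noteq> 0 \<Longrightarrow> ((\<lambda>v. ad u v) has_real_derivative k v * nb u v / (sc u v)\<^sup>2) (at v)"
  unfolding ad_def
  by (rule DERIV_eqE[OF DERIV_divide[OF Dv_na Dv_sc]])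
     (use I2[of u v] in \<open>auto simp: power2_eq_square algebra_simps diff_divide_distrib[symmetric]\<close>)

lemma Dv_H: "sc u v \<noteq> 0 \<Longrightarrow> ((\<lambda>v. ad u v + bd u v) has_real_derivative Hv u v) (at v)"
proof -
  assume s: "sc u v \<noteq> 0"
  have "((\<lambda>v. ad u v + nb u v / sc u v) has_real_derivative Hv u v) (at v)"
    unfolding Hv_def
    by (rule DERIV_eqE[OF DERIV_add[OF Dv_ad[OF s] DERIV_divide[OF Dv_nb Dv_sc s]]])
       (use s in \<open>simp add: power2_eq_square field_simps\<close>)
  then show ?thesis unfolding bd_def .
qed

lemma Du_Hv: "sc u v \<noteq> 0 \<Longrightarrow>
   ((\<lambda>u. Hv u v) has_real_derivative - k u * k v * (na u v + nb u v) / (sc u v * (1 + cc u v))) (at u)"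
  unfolding Hv_def power2_eq_square
  apply (rule DERIV_eqE[OF DERIV_add[OF DERIV_const DERIV_divide[OF DERIV_mult[OF DERIV_mult[OF DERIV_const Du_nb] DERIV_diff[OF DERIV_const Du_cc]] DERIV_mult[OF Du_sc Du_sc]]]])
   apply simp
  using I1[of u v] I3[of u v] cc_ne[of u v]
  by (intro alg_H) (auto simp: algebra_simps)

lemma J1: "cc u v * P u - sc u v * Q u = P v"
proof -
  have "cc u v * P u - sc u v * Q u = P v * ((P u)\<^sup>2 + (Q u)\<^sup>2)"
    unfolding cc_def sc_def by (simp add: power2_eq_square algebra_simps)
  then show ?thesis using unit by simp
qed

lemma J2: "cc u v * Q u + sc u v * P u = Q v"
proof -
  have "cc u v * Q u + sc u v * P u = Q v * ((P u)\<^sup>2 + (Q u)\<^sup>2)"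
    unfolding cc_def sc_def by (simp add: power2_eq_square algebra_simps)
  then show ?thesis using unit by simp
qed

lemma Du_ad: "sc u v \<noteq> 0 \<Longrightarrow> ((\<lambda>u. ad u v) has_real_derivative (- sc u v * sc u v + na u v * (k u * cc u v)) / (sc u v * sc u v)) (at u)"
  unfolding ad_def
  by (rule DERIV_eqE[OF DERIV_divide[OF Du_na Du_sc]]) auto

lemma ReU: "sc u v \<noteq> 0 \<Longrightarrow> ((\<lambda>u. X u + ad u v * P u) has_real_derivative k u * na u v * P v / (sc u v)\<^sup>2) (at u)"
proof -
  assume s: "sc u v \<noteq> 0"
  have "((\<lambda>u. X u + ad u v * P u) has_real_derivative k u * na u v * (cc u v * P u - sc u v * Q u) / (sc u v)\<^sup>2) (at u)"
    by (rule DERIV_eqE[OF DERIV_add[OF dX DERIV_mult[OF Du_ad[OF s] dP]]])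
       (use s in \<open>simp add: P2_eq ad_def power2_eq_square field_simps\<close>)
  then show ?thesis unfolding J1 .
qed

lemma ImU: "sc u v \<noteq> 0 \<Longrightarrow> ((\<lambda>u. Y u + ad u v * Q u) has_real_derivative k u * na u v * Q v / (sc u v)\<^sup>2) (at u)"
proof -
  assume s: "sc u v \<noteq> 0"
  have "((\<lambda>u. Y u + ad u v * Q u) has_real_derivative k u * na u v * (cc u v * Q u + sc u v * P u) / (sc u v)\<^sup>2) (at u)"
    by (rule DERIV_eqE[OF DERIV_add[OF dY DERIV_mult[OF Du_ad[OF s] dQ]]])
       (use s in \<open>simp add: Q2_eq ad_def power2_eq_square field_simps\<close>)
  then show ?thesis unfolding J2 .
qed

lemma ReV: "sc u v \<noteq> 0 \<Longrightarrow> ((\<lambda>v. X u + ad u v * P u) has_real_derivative k v * nb u v * P u / (sc u v)\<^sup>2) (at v)"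
  by (rule DERIV_eqE[OF DERIV_add[OF DERIV_const DERIV_mult[OF Dv_ad DERIV_const]]]) auto

lemma ImV: "sc u v \<noteq> 0 \<Longrightarrow> ((\<lambda>v. Y u + ad u v * Q u) has_real_derivative k v * nb u v * Q u / (sc u v)\<^sup>2) (at v)"
  by (rule DERIV_eqE[OF DERIV_add[OF DERIV_const DERIV_mult[OF Dv_ad DERIV_const]]]) auto

end



lemma cot_half:
  assumes "-1 < C" "C < 1"
  shows "cot (arccos (- C) / 2) = (1 - C) / sqrt (1 - C\<^sup>2)"
proof -
  define \<phi> where "\<phi> = arccos (- C)"
  have b: "0 < \<phi>" "\<phi> < pi" unfolding \<phi>_def using arccos_lt_bounded[of "-C"] assms by auto
  have cphi: "cos \<phi> = - C" unfolding \<phi>_def using assms by simp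
  have sphi: "sin \<phi> = sqrt (1 - C\<^sup>2)" unfolding \<phi>_def using sin_arccos[of "-C"] assms by simp
  have c2: "cos (\<phi> / 2) > 0" using b by (intro cos_gt_zero_pi) auto
  have s2: "sin (\<phi> / 2) > 0" using b by (intro sin_gt_zero) auto
  have "sin \<phi> = 2 * sin (\<phi> / 2) * cos (\<phi> / 2)" using sin_double[of "\<phi> / 2"] by simp
  moreover have "1 + cos \<phi> = 2 * (cos (\<phi> / 2))\<^sup>2" using cos_double_cos[of "\<phi> / 2"] by simp
  ultimately have "(1 + cos \<phi>) / sin \<phi> = cos (\<phi> / 2) / sin (\<phi> / 2)"
    using c2 s2 by (simp add: power2_eq_square field_simps)
  then show ?thesis unfolding cot_def using cphi sphi \<phi>_def by simp
qed

context oval begin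

lemma range_closed: "closed (range \<gamma>)"
proof -
  have "range \<gamma> = \<gamma> ` {0..L}"
  proof
    show "range \<gamma> \<subseteq> \<gamma> ` {0..L}"
    proof
      fix y assume "y \<in> range \<gamma>"
      then obtain t where t: "y = \<gamma> t" by blast
      obtain n :: int where n: "t - of_int n * L \<in> {0..<L}" using red by blast
      have "\<gamma> (t - of_int n * L) = \<gamma> t" using per_int[of "t - of_int n * L" n] by simp
      then show "y \<in> \<gamma> ` {0..L}" using n t by (metis atLeastLessThan_iff atLeastAtMost_iff image_eqI less_eq_real_def)
    qed
  qed auto
  moreover have "compact (\<gamma> ` {0..L})"
    using cgamma by (intro compact_continuous_image) (auto simp: continuous_at_imp_continuous_on)
  ultimately show ?thesis by (simp add: compact_imp_closed)
qed

lemma open_ext: "open (- oval_domain \<gamma>)"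
  unfolding oval_domain_def union_with_inside using open_outside[OF range_closed] by simp

lemma K1: "na u v * P u + nb u v * P v = sc u v * (X v - X u)"
  unfolding na_def nb_def sc_def by (simp add: algebra_simps)
lemma K2: "na u v * Q u + nb u v * Q v = sc u v * (Y v - Y u)"
  unfolding na_def nb_def sc_def by (simp add: algebra_simps)

definition "Bpt u v = Complex (X u + ad u v * P u) (Y u + ad u v * Q u)"

lemma Bpt_neg: "Bpt u v - \<gamma> u = of_real (ad u v) * T u"
  unfolding Bpt_def T_def by (simp add: gamma_eq complex_eq_iff)

lemma Bpt_pos: "sc u v \<noteq> 0 \<Longrightarrow> \<gamma> v - Bpt u v = of_real (bd u v) * T v"
proof -
  assume s: "sc u v \<noteq> 0"
  have "X v - (X u + ad u v * P u) = bd u v * P v"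
    using K1[of u v] s unfolding ad_def bd_def by (simp add: field_simps)
  moreover have "Y v - (Y u + ad u v * Q u) = bd u v * Q v"
    using K2[of u v] s unfolding ad_def bd_def by (simp add: field_simps)
  ultimately show ?thesis unfolding Bpt_def T_def by (simp add: gamma_eq complex_eq_iff)
qed

lemma Bpt_unique:
  assumes s: "sc u v \<noteq> 0" and c1: "B - \<gamma> u = of_real c1 * T u" and c2: "\<gamma> v - B = of_real c2 * T v"
  shows "B = Bpt u v"
proof -
  have "\<gamma> v - \<gamma> u = of_real c1 * T u + of_real c2 * T v" using c1 c2 by (simp add: algebra_simps)
  then have ex: "X v - X u = c1 * P u + c2 * P v" "Y v - Y u = c1 * Q u + c2 * Q v"
    unfolding T_def by (simp_all add: gamma_eq complex_eq_iff)
  have "na u v = c1 * sc u v" unfolding na_def sc_def ex by (simp add: algebra_simps)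
  then have "ad u v = c1" unfolding ad_def using s by simp
  then show ?thesis using c1 Bpt_neg[of u v] by (metis diff_add_cancel)
qed

end



lemma cfs: "(\<And>t. isCont f t) \<Longrightarrow> isCont (\<lambda>z::real\<times>real. f (fst z)) z"
  by (rule isCont_o2[OF _ _]) (auto intro: continuous_intros)
lemma csn: "(\<And>t. isCont f t) \<Longrightarrow> isCont (\<lambda>z::real\<times>real. f (snd z)) z"
  by (rule isCont_o2[OF _ _]) (auto intro: continuous_intros)

context oval begin

lemma main:
  assumes A: "A \<notin> oval_domain \<gamma>" and nt: "neg_tangency \<gamma> A x" and pt: "pos_tangency \<gamma> A x'"
  shows "- deriv (\<lambda>u. deriv (\<lambda>v. Hfun \<gamma> u v) x') x =
           cot (vec_angle (\<gamma> x - A) (\<gamma> x' - A) / 2)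
           * (1 / dist A (\<gamma> x) + 1 / dist A (\<gamma> x'))
           * \<bar>coord_jacobian \<gamma> x x'\<bar>"
proof -
  obtain c where c: "c > 0" "A - \<gamma> x = of_real c * T x"
    using nt unfolding neg_tangency_def T_tangent by blast
  obtain c' where c': "c' > 0" "\<gamma> x' - A = of_real c' * T x'"
    using pt unfolding pos_tangency_def T_tangent by blast
  have notcong: "\<not> (\<exists>n::int. x' = x + of_int n * L)"
  proof
    assume "\<exists>n::int. x' = x + of_int n * L"
    then obtain n :: int where n: "x' = x + of_int n * L" by blast
    have "\<gamma> x' = \<gamma> x" "T x' = T x" using n per_int T_per_int by auto
    then have e: "- (of_real c * T x) = of_real c' * T x" using c(2) c'(2) by (simp add: algebra_simps)
    have "of_real c' * T x + of_real c * T x = 0" using e[symmetric] by (simp only: eq_neg_iff_add_eq_0)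
    then have "of_real (c + c') * T x = 0" by (simp add: distrib_right add.commute)
    then have "c + c' = 0 \<or> T x = 0" by (simp only: mult_eq_0_iff of_real_eq_0_iff)
    then show False using c(1) c'(1) T_nz[of x] by linarith
  qed
  have dg: "\<gamma> x' - \<gamma> x = of_real c * T x + of_real c' * T x'" using c(2) c'(2) by (simp add: algebra_simps)
  then have ex: "X x' - X x = c * P x + c' * P x'" "Y x' - Y x = c * Q x + c' * Q x'"
    unfolding T_def by (simp_all add: gamma_eq complex_eq_iff)
  have "Im (cnj (T x) * (\<gamma> x' - \<gamma> x)) > 0" by (rule convex_side[OF notcong])
  then have nbpos: "nb x x' > 0" unfolding T_def nb_def by (simp add: gamma_eq algebra_simps)
  have nbe: "nb x x' = c' * sc x x'" unfolding nb_def sc_def ex by (simp add: algebra_simps)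
  have nae: "na x x' = c * sc x x'" unfolding na_def sc_def ex by (simp add: algebra_simps)
  have s0: "sc x x' \<noteq> 0" using nbpos nbe by auto
  have ad0: "ad x x' = c" unfolding ad_def nae using s0 by simp
  have bd0: "bd x x' = c'" unfolding bd_def nbe using s0 by simp
  have BA: "Bpt x x' = A" using Bpt_neg[of x x'] c(2) ad0 by (metis diff_add_cancel)
  define cond where "cond z = (sc (fst z) (snd z) \<noteq> 0 \<and> ad (fst z) (snd z) > 0 \<and> bd (fst z) (snd z) > 0
      \<and> Bpt (fst z) (snd z) \<in> - oval_domain \<gamma>)" for z :: "real \<times> real"
  define z0 where "z0 = (x, x')"
  have cPf: "isCont (\<lambda>z. P (fst z)) z0" "isCont (\<lambda>z. Q (fst z)) z0" "isCont (\<lambda>z. X (fst z)) z0" "isCont (\<lambda>z. Y (fst z)) z0"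
    "isCont (\<lambda>z. P (snd z)) z0" "isCont (\<lambda>z. Q (snd z)) z0" "isCont (\<lambda>z. X (snd z)) z0" "isCont (\<lambda>z. Y (snd z)) z0"
    using cP cQ cX cY by (auto intro!: cfs csn)
  have sc0: "sc (fst z0) (snd z0) \<noteq> 0" using s0 unfolding z0_def by simp
  have csc: "isCont (\<lambda>z. sc (fst z) (snd z)) z0" unfolding sc_def using cPf by (intro continuous_intros) auto
  have cna: "isCont (\<lambda>z. na (fst z) (snd z)) z0" unfolding na_def using cPf by (intro continuous_intros) auto
  have cnb: "isCont (\<lambda>z. nb (fst z) (snd z)) z0" unfolding nb_def using cPf by (intro continuous_intros) auto
  have cad: "isCont (\<lambda>z. ad (fst z) (snd z)) z0" unfolding ad_def using cna csc sc0 by (intro continuous_intros) auto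
  have cbd: "isCont (\<lambda>z. bd (fst z) (snd z)) z0" unfolding bd_def using cnb csc sc0 by (intro continuous_intros) auto
  have cB: "isCont (\<lambda>z. Bpt (fst z) (snd z)) z0" unfolding Bpt_def Complex_eq using cad cPf
    by (intro continuous_intros) auto
  have ev1: "eventually (\<lambda>z. sc (fst z) (snd z) \<in> - {0}) (at z0)"
    using csc sc0 unfolding isCont_def by (intro topological_tendstoD) auto
  have ev2: "eventually (\<lambda>z. ad (fst z) (snd z) \<in> {0<..}) (at z0)"
    using cad ad0 c(1) unfolding isCont_def z0_def by (intro topological_tendstoD) auto
  have ev3: "eventually (\<lambda>z. bd (fst z) (snd z) \<in> {0<..}) (at z0)"
    using cbd bd0 c'(1) unfolding isCont_def z0_def by (intro topological_tendstoD) auto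
  have ev4: "eventually (\<lambda>z. Bpt (fst z) (snd z) \<in> - oval_domain \<gamma>) (at z0)"
    using cB BA A open_ext unfolding isCont_def z0_def by (intro topological_tendstoD) auto
  have "eventually cond (at z0)"
    using eventually_conj[OF ev1 eventually_conj[OF ev2 eventually_conj[OF ev3 ev4]]]
    unfolding cond_def by (rule eventually_mono) auto
  then obtain d where d: "d > 0" "\<And>z. z \<noteq> z0 \<Longrightarrow> dist z z0 < d \<Longrightarrow> cond z"
    unfolding eventually_at by auto
  have cz0: "cond z0" unfolding cond_def z0_def using s0 ad0 bd0 c(1) c'(1) BA A by simp
  define e where "e = d / 2"
  have e: "e > 0" using d unfolding e_def by simp
  have box: "cond (u, v)" if "\<bar>u - x\<bar> < e" "\<bar>v - x'\<bar> < e" for u v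
  proof (cases "(u, v) = z0")
    case True then show ?thesis using cz0 by simp
  next
    case False
    have "dist (u, v) z0 = sqrt ((u - x)\<^sup>2 + (v - x')\<^sup>2)" unfolding z0_def dist_Pair_Pair dist_real_def by simp
    also have "\<dots> \<le> \<bar>u - x\<bar> + \<bar>v - x'\<bar>" by (rule sqrt_sum_squares_le_sum_abs)
    also have "\<dots> < d" using that unfolding e_def by simp
    finally show ?thesis using d(2) False by blast
  qed
  have CP: "coord_point \<gamma> u v = Bpt u v" if "\<bar>u - x\<bar> < e" "\<bar>v - x'\<bar> < e" for u v
  proof -
    have cu: "cond (u, v)" using box[OF that] .
    then have s: "sc u v \<noteq> 0" and pa: "ad u v > 0" and pb: "bd u v > 0" and out: "Bpt u v \<notin> oval_domain \<gamma>"
      unfolding cond_def by auto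
    show ?thesis unfolding coord_point_def
    proof (rule the_equality)
      show "Bpt u v \<notin> oval_domain \<gamma> \<and> neg_tangency \<gamma> (Bpt u v) u \<and> pos_tangency \<gamma> (Bpt u v) v"
        unfolding neg_tangency_def pos_tangency_def T_tangent
        using out pa pb Bpt_neg[of u v] Bpt_pos[OF s] by blast
      fix B assume "B \<notin> oval_domain \<gamma> \<and> neg_tangency \<gamma> B u \<and> pos_tangency \<gamma> B v"
      then obtain c1 c2 where "B - \<gamma> u = of_real c1 * T u" "\<gamma> v - B = of_real c2 * T v"
        unfolding neg_tangency_def pos_tangency_def T_tangent by blast
      then show "B = Bpt u v" by (rule Bpt_unique[OF s])
    qed
  qed
  have HF: "Hfun \<gamma> u v = ad u v + bd u v" if "\<bar>u - x\<bar> < e" "\<bar>v - x'\<bar> < e" for u v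
  proof -
    have cu: "cond (u, v)" using box[OF that] .
    then have s: "sc u v \<noteq> 0" and pa: "ad u v > 0" and pb: "bd u v > 0" unfolding cond_def by auto
    have "dist (\<gamma> u) (Bpt u v) = norm (Bpt u v - \<gamma> u)" by (simp add: dist_norm norm_minus_commute)
    also have "\<dots> = ad u v" unfolding Bpt_neg using pa unitT[of u] by (simp add: norm_mult)
    finally have 1: "dist (\<gamma> u) (Bpt u v) = ad u v" .
    have "dist (Bpt u v) (\<gamma> v) = norm (\<gamma> v - Bpt u v)" by (simp add: dist_norm norm_minus_commute)
    also have "\<dots> = bd u v" unfolding Bpt_pos[OF s] using pb unitT[of v] by (simp add: norm_mult)
    finally have 2: "dist (Bpt u v) (\<gamma> v) = bd u v" .
    show ?thesis unfolding Hfun_def CP[OF that] using 1 2 by simp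
  qed
  have inner: "deriv (\<lambda>v. Hfun \<gamma> u v) x' = Hv u x'" if u: "\<bar>u - x\<bar> < e" for u
  proof -
    have "sc u x' \<noteq> 0" using box[OF u, of x'] e unfolding cond_def by simp
    then have "((\<lambda>v. ad u v + bd u v) has_real_derivative Hv u x') (at x')" by (rule Dv_H)
    then have "((\<lambda>v. Hfun \<gamma> u v) has_real_derivative Hv u x') (at x')"
    proof (rule has_field_derivative_transform_within_open[where S = "ball x' e"])
      show "open (ball x' e)" "x' \<in> ball x' e" using e by auto
      show "ad u v + bd u v = Hfun \<gamma> u v" if "v \<in> ball x' e" for v
        using HF[OF u, of v] that by (simp add: dist_real_def abs_minus_commute)
    qed
    then show ?thesis by (rule DERIV_imp_deriv)
  qed
  define val where "val = - k x * k x' * (na x x' + nb x x') / (sc x x' * (1 + cc x x'))"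
  have "((\<lambda>u. Hv u x') has_real_derivative val) (at x)" unfolding val_def by (rule Du_Hv[OF s0])
  then have "((\<lambda>u. deriv (\<lambda>v. Hfun \<gamma> u v) x') has_real_derivative val) (at x)"
  proof (rule has_field_derivative_transform_within_open[where S = "ball x e"])
    show "open (ball x e)" "x \<in> ball x e" using e by auto
    show "Hv u x' = deriv (\<lambda>v. Hfun \<gamma> u v) x'" if "u \<in> ball x e" for u
      using inner[of u] that by (simp add: dist_real_def abs_minus_commute)
  qed
  then have LHS: "deriv (\<lambda>u. deriv (\<lambda>v. Hfun \<gamma> u v) x') x = val" by (rule DERIV_imp_deriv)
  have inb: "u \<in> ball x e \<Longrightarrow> \<bar>u - x\<bar> < e" for u by (simp add: dist_real_def abs_minus_commute)
  have inb': "v \<in> ball x' e \<Longrightarrow> \<bar>v - x'\<bar> < e" for v by (simp add: dist_real_def abs_minus_commute)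
  have oe: "open (ball x e)" "x \<in> ball x e" "open (ball x' e)" "x' \<in> ball x' e" using e by auto
  have j1: "deriv (\<lambda>u. Re (coord_point \<gamma> u x')) x = k x * na x x' * P x' / (sc x x')\<^sup>2"
    by (rule DERIV_imp_deriv, rule has_field_derivative_transform_within_open[OF ReU[OF s0] oe(1,2)])
       (use CP[OF inb, of _ x'] e in \<open>simp add: Bpt_def\<close>)
  have j4: "deriv (\<lambda>u. Im (coord_point \<gamma> u x')) x = k x * na x x' * Q x' / (sc x x')\<^sup>2"
    by (rule DERIV_imp_deriv, rule has_field_derivative_transform_within_open[OF ImU[OF s0] oe(1,2)])
       (use CP[OF inb, of _ x'] e in \<open>simp add: Bpt_def\<close>)
  have j3: "deriv (\<lambda>v. Re (coord_point \<gamma> x v)) x' = k x' * nb x x' * P x / (sc x x')\<^sup>2"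
    by (rule DERIV_imp_deriv, rule has_field_derivative_transform_within_open[OF ReV[OF s0] oe(3,4)])
       (use CP[OF _ inb', of x] e in \<open>simp add: Bpt_def\<close>)
  have j2: "deriv (\<lambda>v. Im (coord_point \<gamma> x v)) x' = k x' * nb x x' * Q x / (sc x x')\<^sup>2"
    by (rule DERIV_imp_deriv, rule has_field_derivative_transform_within_open[OF ImV[OF s0] oe(3,4)])
       (use CP[OF _ inb', of x] e in \<open>simp add: Bpt_def\<close>)
  have J: "coord_jacobian \<gamma> x x' = - k x * k x' * c * c' / sc x x'"
  proof -
    have "coord_jacobian \<gamma> x x' = k x * k x' * na x x' * nb x x' * (P x' * Q x - P x * Q x') / ((sc x x')\<^sup>2 * (sc x x')\<^sup>2)"
      unfolding coord_jacobian_def j1 j2 j3 j4 using s0 by (simp add: power2_eq_square field_simps)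
    also have "\<dots> = - k x * k x' * c * c' / sc x x'"
    proof -
      have h: "P x' * Q x - P x * Q x' = - sc x x'" by (simp add: sc_def)
      show ?thesis unfolding nae nbe h using s0 by (simp add: power2_eq_square field_simps)
    qed
    finally show ?thesis .
  qed
  define C where "C = cc x x'"
  define s where "s = sc x x'"
  have sC: "s\<^sup>2 + C\<^sup>2 = 1" using I1[of x x'] unfolding s_def C_def .
  have snz: "s \<noteq> 0" using s0 unfolding s_def .
  have Cb: "-1 < C" "C < 1"
  proof -
    have "C\<^sup>2 < 1" using sC snz by (smt (verit) zero_less_power2)
    then show "-1 < C" "C < 1" by (auto simp: abs_square_less_1)
  qed
  have vx: "\<gamma> x - A = - (of_real c * T x)" using c(2) by (simp add: algebra_simps)
  have vx': "\<gamma> x' - A = of_real c' * T x'" using c'(2) .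
  have inner_eq: "(\<gamma> x - A) \<bullet> (\<gamma> x' - A) = - c * c' * C"
    unfolding vx vx' C_def cc_def T_def by (simp add: inner_complex_def algebra_simps)
  have n1: "norm (\<gamma> x - A) = c" unfolding vx using c(1) unitT[of x] by (simp add: norm_mult)
  have n2: "norm (\<gamma> x' - A) = c'" unfolding vx' using c'(1) unitT[of x'] by (simp add: norm_mult)
  have va: "vec_angle (\<gamma> x - A) (\<gamma> x' - A) = arccos (- C)"
    unfolding vec_angle_def inner_eq n1 n2 using c(1) c'(1) by simp
  have cotv: "cot (vec_angle (\<gamma> x - A) (\<gamma> x' - A) / 2) = (1 - C) / \<bar>s\<bar>"
  proof -
    have "1 - C\<^sup>2 = s\<^sup>2" using sC by simp
    then show ?thesis unfolding va using cot_half[OF Cb] by simp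
  qed
  have d1: "dist A (\<gamma> x) = c" using n1 by (simp add: dist_norm norm_minus_commute)
  have d2: "dist A (\<gamma> x') = c'" using n2 by (simp add: dist_norm norm_minus_commute)
  have kp: "k x > 0" "k x' > 0" using k_pos by auto
  have absJ: "\<bar>coord_jacobian \<gamma> x x'\<bar> = k x * k x' * c * c' / \<bar>s\<bar>"
    unfolding J s_def using kp c(1) c'(1) by (simp add: abs_mult abs_divide)
  have C1: "1 + C \<noteq> 0" using Cb by simp
  have ss: "s * s = (1 - C) * (1 + C)" using sC by (simp add: power2_eq_square algebra_simps)
  have "- val = k x * k x' * (c + c') / (1 + C)"
  proof -
    have h1: "s * (1 + C) \<noteq> 0" using snz C1 by simp
    have "s + C * s = s * (1 + C)" by (simp add: algebra_simps)
    then have "s + C * s \<noteq> 0" using h1 by simp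
    moreover have "C + 1 \<noteq> 0" using C1 by (simp add: add.commute)
    ultimately show ?thesis
      unfolding val_def nae nbe C_def[symmetric] s_def[symmetric] using snz C1 by (simp add: field_simps)
  qed
  also have "\<dots> = (1 - C) / \<bar>s\<bar> * (1 / c + 1 / c') * (k x * k x' * c * c' / \<bar>s\<bar>)"
  proof -
    have eq: "\<bar>s\<bar> * \<bar>s\<bar> = (1 - C) * (1 + C)" using ss by (metis abs_mult_self_eq)
    have "(1 - C) / \<bar>s\<bar> * (1 / c + 1 / c') * (k x * k x' * c * c' / \<bar>s\<bar>)
        = (1 - C) * ((c + c') * (k x * k x')) / (\<bar>s\<bar> * \<bar>s\<bar>)" using c(1) c'(1) snz by (simp add: field_simps)
    also have "\<dots> = (1 - C) * ((c + c') * (k x * k x')) / ((1 - C) * (1 + C))" by (simp only: eq)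
    also have "\<dots> = ((c + c') * (k x * k x')) / (1 + C)" using Cb by (intro mult_divide_mult_cancel_left) simp
    also have "\<dots> = k x * k x' * (c + c') / (1 + C)" by (simp add: mult.commute)
    finally show ?thesis by simp
  qed
  finally show ?thesis unfolding LHS cotv d1 d2 absJ .
qed

end

theorem lemma2p2:
  fixes \<gamma> :: "real \<Rightarrow> complex" and L x x' :: real and A :: complex
  assumes "arclength_oval \<gamma> L"
    and "A \<notin> oval_domain \<gamma>"
    and "neg_tangency \<gamma> A x"
    and "pos_tangency \<gamma> A x'"
  shows "- deriv (\<lambda>u. deriv (\<lambda>v. Hfun \<gamma> u v) x') x =
           cot (vec_angle (\<gamma> x - A) (\<gamma> x' - A) / 2)
           * (1 / dist A (\<gamma> x) + 1 / dist A (\<gamma> x'))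
           * \<bar>coord_jacobian \<gamma> x x'\<bar>"
proof -
  interpret oval \<gamma> L by unfold_locales (rule assms(1))
  show ?thesis by (rule main[OF assms(2-4)])
qed


end
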